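(* Let $p\ge 2$ and $r\in R_p$. Then the set $N_p^{c_p^r}$ exists and $N_p^{c_p^r}\subseteq\overline{B(r)}$.
   Context: Let $f:\mathbb{R}^n\to\mathbb{R}^n$ be real-analytic with $f(0)=0$, and assume all eigenvalues of $A=\frac{\partial f}{\partial x}(0)$ have negative real parts. $\|\cdot\|$ is the Euclidean norm and $B(r)=\{x:\|x\|<r\}$. Let $V$ be the real-analytic function on a neighborhood of $0$ with $\langle\nabla V(x),f(x)\rangle=-\|x\|^2$, $V(0)=0$, and for $p\ge 2$ let $V_p$ be the Taylor polynomial of $V$ at $0$ of degree $p$ (terms of degrees $2,\dots,p$). Let $G_p$ be the maximal domain (connected open set) containing $0$ such that $V_p(x)>0$ and $\langle\nabla V_p(x),f(x)\rangle<0$ for all $x\in G_p\setminus\{0\}$. A closed connected set $S\subset\mathbb{R}^n$ is called $(p,c)$-admissible if: $0\in\mathrm{Int}(S)$; $V_p(x)<c$ for all $x\in\mathrm{Int}(S)$; $V_p(x)=c$ for all $x\in\partial S$; and $S$ is compact with $S\subset G_p$. For given $p,c$ there is at most one such set; when it exists it is denoted $N_p^c$. Let $R_p=\{r>0:\overline{B(r)}\subset G_p\}$ and, for $r\in R_p$, $c_p^r=\inf_{\|x\|=r}V_p(x)$. *)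

theory Defs
  imports "HOL-Analysis.Analysis"
begin

definition monomial :: "('n::finite \<Rightarrow> nat) \<Rightarrow> real^'n \<Rightarrow> real" where
  "monomial \<alpha> x = (\<Prod>i\<in>UNIV. (x $ i) ^ (\<alpha> i))"

definition mdeg :: "('n::finite \<Rightarrow> nat) \<Rightarrow> nat" where
  "mdeg \<alpha> = (\<Sum>i\<in>UNIV. \<alpha> i)"

definition has_power_series ::
  "(real^'n::finite \<Rightarrow> 'b::real_normed_vector) \<Rightarrow> (('n \<Rightarrow> nat) \<Rightarrow> 'b) \<Rightarrow> real^'n \<Rightarrow> real \<Rightarrow> bool" where
  "has_power_series F c x0 \<rho> \<longleftrightarrow>
     (\<forall>x\<in>ball x0 \<rho>. ((\<lambda>\<alpha>. monomial \<alpha> (x - x0) *\<^sub>R c \<alpha>) has_sum F x) UNIV)"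

definition real_analytic_on ::
  "(real^'n::finite \<Rightarrow> 'b::real_normed_vector) \<Rightarrow> (real^'n) set \<Rightarrow> bool" where
  "real_analytic_on F U \<longleftrightarrow>
     (\<forall>x0\<in>U. \<exists>\<rho>>0. \<exists>c. has_power_series F c x0 \<rho>)"

definition taylor_poly :: "(('n::finite \<Rightarrow> nat) \<Rightarrow> real) \<Rightarrow> nat \<Rightarrow> real^'n \<Rightarrow> real" where
  "taylor_poly c p x = (\<Sum>\<alpha>\<in>{\<alpha>. 2 \<le> mdeg \<alpha> \<and> mdeg \<alpha> \<le> p}. c \<alpha> * monomial \<alpha> x)"

definition good_domain :: "(real^'n::finite \<Rightarrow> real^'n) \<Rightarrow> (real^'n \<Rightarrow> real) \<Rightarrow> (real^'n) set \<Rightarrow> bool" where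
  "good_domain f W S \<longleftrightarrow> open S \<and> connected S \<and> 0 \<in> S \<and>
     (\<forall>x\<in>S - {0}. W x > 0 \<and> frechet_derivative W (at x) (f x) < 0)"

definition Gdom :: "(real^'n::finite \<Rightarrow> real^'n) \<Rightarrow> (real^'n \<Rightarrow> real) \<Rightarrow> (real^'n) set" where
  "Gdom f W = \<Union>{S. good_domain f W S}"

text \<open>(p,c)-admissible sets for the function W (= V_p) and domain G (= G_p).\<close>

definition admissible :: "(real^'n::finite \<Rightarrow> real) \<Rightarrow> (real^'n) set \<Rightarrow> real \<Rightarrow> (real^'n) set \<Rightarrow> bool" where
  "admissible W G c S \<longleftrightarrow> closed S \<and> connected S \<and> 0 \<in> interior S \<and>
     (\<forall>x\<in>interior S. W x < c) \<and> (\<forall>x\<in>frontier S. W x = c) \<and> compact S \<and> S \<subseteq> G"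

end

theory Submission
  imports Defs
begin

definition DW :: "(('n::finite \<Rightarrow> nat) \<Rightarrow> real) \<Rightarrow> nat \<Rightarrow> real^'n \<Rightarrow> real^'n \<Rightarrow> real" where
 "DW c p x h = (\<Sum>\<alpha>\<in>{\<alpha>. 2 \<le> mdeg \<alpha> \<and> mdeg \<alpha> \<le> p}. c \<alpha> * (\<Sum>i\<in>UNIV. (of_nat (\<alpha> i) * h$i * (x$i)^(\<alpha> i - 1)) * (\<Prod>j\<in>UNIV-{i}. (x$j)^(\<alpha> j))))"

lemma W_deriv: "(taylor_poly c p has_derivative DW c p x) (at x within S)"
  unfolding taylor_poly_def monomial_def DW_def[abs_def]
  by (intro derivative_eq_intros) (auto intro!: bounded_linear_imp_has_derivative bounded_linear_vec_nth)

lemma DW_cont: "continuous_on T (\<lambda>x. DW c p x x)"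
  unfolding DW_def by (intro continuous_intros)

lemma W_cont: "continuous_on T (taylor_poly c p)"
  unfolding taylor_poly_def monomial_def by (intro continuous_intros)

lemma W0: "taylor_poly c p 0 = 0"
  unfolding taylor_poly_def monomial_def mdeg_def
proof (intro sum.neutral ballI)
  fix \<alpha> :: "'a \<Rightarrow> nat" assume "\<alpha> \<in> {\<alpha>. 2 \<le> (\<Sum>i\<in>UNIV. \<alpha> i) \<and> (\<Sum>i\<in>UNIV. \<alpha> i) \<le> p}"
  then have "\<exists>i. \<alpha> i \<noteq> 0"
  proof (rule contrapos_pp)
    assume "\<not> (\<exists>i. \<alpha> i \<noteq> 0)"
    then have "(\<Sum>i\<in>UNIV. \<alpha> i) = 0" by simp
    then show "\<alpha> \<notin> {\<alpha>. 2 \<le> (\<Sum>i\<in>UNIV. \<alpha> i) \<and> (\<Sum>i\<in>UNIV. \<alpha> i) \<le> p}" by simp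
  qed
  then obtain i where "\<alpha> i \<noteq> 0" by blast
  then show "c \<alpha> * (\<Prod>i\<in>UNIV. (0 $ i) ^ \<alpha> i) = 0"
    by (auto intro!: prod_zero)
qed



context
  fixes W :: "real^'n::finite \<Rightarrow> real" and D :: "real^'n \<Rightarrow> real^'n \<Rightarrow> real"
  assumes Wd: "\<And>x. (W has_derivative D x) (at x)"
begin

lemma D_scale: "D x (t *\<^sub>R w) = t * D x w"
proof -
  have "linear (D x)" using Wd[of x] has_derivative_linear by blast
  then show ?thesis using linear_scale by fastforce
qed

lemma dir_deriv: "((\<lambda>t. W (x + t *\<^sub>R w)) has_real_derivative D x w) (at t0)"
 if "x + t0 *\<^sub>R w = x"
proof -
  have "((\<lambda>t. x + t *\<^sub>R w) has_derivative (\<lambda>h. h *\<^sub>R w)) (at t0)"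
    by (intro derivative_eq_intros) auto
  from has_derivative_compose[OF this, of W "D x"] Wd[of x] that
  have "((\<lambda>t. W (x + t *\<^sub>R w)) has_derivative (\<lambda>h. D x (h *\<^sub>R w))) (at t0)" by simp
  then show ?thesis unfolding has_field_derivative_def D_scale by (simp add: mult.commute[of _ "D x w"])
qed

lemma increase:
  assumes "D x w > 0" "e > 0"
  shows "\<exists>y\<in>ball x e. W y > W x"
proof -
  have "((\<lambda>t. W (x + t *\<^sub>R w)) has_real_derivative D x w) (at 0)"
    by (rule dir_deriv) simp
  from has_real_derivative_pos_inc_right[OF this assms(1)]
  obtain d where d: "d > 0" "\<And>h. h > 0 \<Longrightarrow> h < d \<Longrightarrow> W x < W (x + h *\<^sub>R w)" by auto
  define h where "h = min (d/2) (e / (2 * (norm w + 1)))"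
  have "e / (2 * (norm w + 1)) > 0" using assms(2) by (smt (verit) norm_ge_zero divide_pos_pos)
  then have h: "h > 0" "h < d" using d by (auto simp: h_def)
  have "h * norm w < e"
  proof -
    have "h * norm w \<le> (e / (2 * (norm w + 1))) * norm w"
      by (intro mult_right_mono) (auto simp: h_def)
    also have "\<dots> = e * (norm w / (2 * (norm w + 1)))" by simp
    also have "\<dots> < e * 1"
    proof (rule mult_strict_left_mono)
      have "0 < 2 * (norm w + 1)" by (simp add: add_nonneg_pos)
      then show "norm w / (2 * (norm w + 1)) < 1" by (simp add: pos_divide_less_eq)
    qed (use assms(2) in simp)
    also have "\<dots> = e" by simp
    finally show ?thesis .
  qed
  then have "x + h *\<^sub>R w \<in> ball x e" using h by (simp add: dist_norm)
  then show ?thesis using d(2)[OF h] by blast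
qed

lemma D_diff: "D x (a - b) = D x a - D x b"
proof -
  have "linear (D x)" using Wd[of x] has_derivative_linear by blast
  then show ?thesis by (simp add: linear_diff)
qed

lemma lagrange:
  assumes r: "r > 0" and z: "norm z = r" and zmin: "\<And>y. norm y = r \<Longrightarrow> W z \<le> W y"
    and v: "D z v < 0"
  shows "D z z \<noteq> 0"
proof
  assume Dzz: "D z z = 0"
  define w where "w = v - ((v \<bullet> z) / r\<^sup>2) *\<^sub>R z"
  have zz: "z \<bullet> z = r\<^sup>2" using z by (metis power2_norm_eq_inner)
  have wz: "w \<bullet> z = 0" using r zz by (simp add: w_def inner_diff_left)
  have Dw: "D z w < 0" using v Dzz by (simp add: w_def D_diff D_scale)
  have z0: "z \<noteq> 0" using z r by auto
  have ne: "z + t *\<^sub>R w \<noteq> 0" for t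
  proof
    assume "z + t *\<^sub>R w = 0"
    then have "(z + t *\<^sub>R w) \<bullet> z = 0" by simp
    then show False using wz zz r by (simp add: inner_add_left)
  qed
  have d1: "((\<lambda>t. z + t *\<^sub>R w) has_derivative (\<lambda>h. h *\<^sub>R w)) (at 0)"
    by (intro derivative_eq_intros) auto
  have Nd0: "((\<lambda>t. norm (z + t *\<^sub>R w)) has_derivative (\<lambda>h. (h *\<^sub>R w) \<bullet> sgn z)) (at 0)"
    using has_derivative_compose[OF d1, of norm "\<lambda>h. h \<bullet> sgn z"] has_derivative_norm[OF z0] by simp
  have "(\<lambda>h. (h *\<^sub>R w) \<bullet> sgn z) = (\<lambda>h. 0)"
    using wz by (auto simp: sgn_div_norm)
  with Nd0 have Nd: "((\<lambda>t. norm (z + t *\<^sub>R w)) has_derivative (\<lambda>h. 0)) (at 0)" by simp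
  have gd: "((\<lambda>t. r / norm (z + t *\<^sub>R w)) has_derivative (\<lambda>h. 0)) (at 0)"
    using has_derivative_divide'[OF has_derivative_const Nd, of r] z0 by simp
  have gam: "((\<lambda>t. (r / norm (z + t *\<^sub>R w)) *\<^sub>R (z + t *\<^sub>R w)) has_derivative (\<lambda>h. h *\<^sub>R w)) (at 0)"
    using has_derivative_scaleR[OF gd d1] z r by simp
  have "((\<lambda>t. W ((r / norm (z + t *\<^sub>R w)) *\<^sub>R (z + t *\<^sub>R w))) has_derivative (\<lambda>h. D z (h *\<^sub>R w))) (at 0)"
    using has_derivative_compose[OF gam, of W "D z"] Wd[of z] z r by simp
  then have "((\<lambda>t. W ((r / norm (z + t *\<^sub>R w)) *\<^sub>R (z + t *\<^sub>R w))) has_real_derivative D z w) (at 0)"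
    unfolding has_field_derivative_def D_scale by (simp add: mult.commute[of _ "D z w"])
  from has_real_derivative_neg_dec_right[OF this Dw]
  obtain d where d: "d > 0" "\<And>h. h > 0 \<Longrightarrow> h < d \<Longrightarrow>
      W ((r / norm (z + h *\<^sub>R w)) *\<^sub>R (z + h *\<^sub>R w)) < W z"
    using z r by auto
  have "norm ((r / norm (z + (d/2) *\<^sub>R w)) *\<^sub>R (z + (d/2) *\<^sub>R w)) = r"
    using ne[of "d/2"] r by simp
  from zmin[OF this] d(2)[of "d/2"] d(1) show False by simp
qed

lemma dir_deriv': "((\<lambda>t. W (x + t *\<^sub>R w)) has_real_derivative D (x + t0 *\<^sub>R w) w) (at t0)"
proof -
  have "((\<lambda>t. x + t *\<^sub>R w) has_derivative (\<lambda>h. h *\<^sub>R w)) (at t0)"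
    by (intro derivative_eq_intros) auto
  from has_derivative_compose[OF this, of W "D (x + t0 *\<^sub>R w)"] Wd[of "x + t0 *\<^sub>R w"]
  have "((\<lambda>t. W (x + t *\<^sub>R w)) has_derivative (\<lambda>h. D (x + t0 *\<^sub>R w) (h *\<^sub>R w))) (at t0)" by simp
  then show ?thesis unfolding has_field_derivative_def D_scale
    by (simp add: mult.commute[of _ "D (x + t0 *\<^sub>R w) w"])
qed

lemma radial_mvt:
  assumes r: "r > 0" and y: "y \<noteq> 0"
  shows "\<exists>s>0. (\<forall>z. norm z = r \<longrightarrow> norm (s *\<^sub>R y - z) \<le> 2 * norm (y - z)) \<and>
    W y - W ((r / norm y) *\<^sub>R y) = ((norm y - r) / (norm y * s)) * D (s *\<^sub>R y) (s *\<^sub>R y)"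
proof -
  define u where "u = (r / norm y) *\<^sub>R y"
  define \<phi> where "\<phi> t = W (u + t *\<^sub>R (y - u))" for t
  have der: "(\<phi> has_real_derivative D (u + t *\<^sub>R (y - u)) (y - u)) (at t)" for t
    unfolding \<phi>_def by (rule dir_deriv')
  have cont: "continuous_on {0..1} \<phi>"
    using der by (meson DERIV_isCont continuous_at_imp_continuous_on)
  obtain \<xi> where xi: "0 < \<xi>" "\<xi> < 1"
    "\<phi> 1 - \<phi> 0 = (\<lambda>h. h * D (u + \<xi> *\<^sub>R (y - u)) (y - u)) (1 - 0)"
  proof -
    have der2: "(\<phi> has_derivative (\<lambda>h. h * D (u + t *\<^sub>R (y - u)) (y - u))) (at t)" for t
    proof -
      have "(*) (D (u + t *\<^sub>R (y - u)) (y - u)) = (\<lambda>h. h * D (u + t *\<^sub>R (y - u)) (y - u))"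
        by (auto simp: fun_eq_iff mult.commute)
      then show ?thesis using der[of t] unfolding has_field_derivative_def by simp
    qed
    show ?thesis
      using mvt[of 0 1 \<phi> "\<lambda>t h. h * D (u + t *\<^sub>R (y - u)) (y - u)", OF _ cont der2] that by auto
  qed
  define s where "s = (1 - \<xi>) * (r / norm y) + \<xi>"
  have ny: "norm y > 0" using y by simp
  have s0: "s > 0"
  proof -
    have "r / norm y > 0" using r ny by simp
    then have "(1 - \<xi>) * (r / norm y) \<ge> 0" using xi by (intro mult_nonneg_nonneg) auto
    then show ?thesis unfolding s_def using xi by linarith
  qed
  have p: "u + \<xi> *\<^sub>R (y - u) = s *\<^sub>R y"
    by (simp add: u_def s_def algebra_simps flip: scaleR_add_left add_divide_distrib)
  have yu: "y - u = ((norm y - r) / (norm y * s)) *\<^sub>R (s *\<^sub>R y)"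
  proof -
    have "(norm y - r) / (norm y * s) * s = 1 - r / norm y" using ny s0 by (simp add: field_simps)
    then have "((norm y - r) / (norm y * s)) *\<^sub>R (s *\<^sub>R y) = (1 - r / norm y) *\<^sub>R y"
      by (simp only: scaleR_scaleR)
    moreover have "y - u = (1 - r / norm y) *\<^sub>R y" by (simp add: u_def algebra_simps)
    ultimately show ?thesis by (simp only:)
  qed
  have eq: "W y - W u = ((norm y - r) / (norm y * s)) * D (s *\<^sub>R y) (s *\<^sub>R y)"
  proof -
    have "W y - W u = \<phi> 1 - \<phi> 0" by (simp add: \<phi>_def)
    also have "\<dots> = D (u + \<xi> *\<^sub>R (y - u)) (y - u)" using xi(3) by simp
    also have "\<dots> = D (s *\<^sub>R y) (y - u)" by (simp only: p)
    also have "\<dots> = ((norm y - r) / (norm y * s)) * D (s *\<^sub>R y) (s *\<^sub>R y)"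
      by (subst yu) (rule D_scale)
    finally show ?thesis .
  qed
  have close: "norm (s *\<^sub>R y - z) \<le> 2 * norm (y - z)" if z: "norm z = r" for z
  proof -
    have "norm (u - y) = \<bar>r - norm y\<bar>"
    proof -
      have "u - y = (r / norm y - 1) *\<^sub>R y" by (simp add: u_def algebra_simps)
      then have "norm (u - y) = \<bar>r / norm y - 1\<bar> * norm y" by simp
      also have "\<dots> = \<bar>(r / norm y - 1) * norm y\<bar>" using ny by (simp add: abs_mult)
      also have "(r / norm y - 1) * norm y = r - norm y" using ny by (simp add: field_simps)
      finally show ?thesis .
    qed
    also have "\<dots> \<le> norm (y - z)" using z norm_triangle_ineq3[of y z] by (simp add: abs_minus_commute)
    finally have uy: "norm (u - y) \<le> norm (y - z)" .
    have uz: "norm (u - z) \<le> 2 * norm (y - z)"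
      using norm_triangle_ineq[of "u - y" "y - z"] uy by simp
    have "(1 - \<xi>) *\<^sub>R (u - z) + \<xi> *\<^sub>R (y - z) = u + \<xi> *\<^sub>R (y - u) - z"
      by (simp add: algebra_simps)
    then have "s *\<^sub>R y - z = (1 - \<xi>) *\<^sub>R (u - z) + \<xi> *\<^sub>R (y - z)" using p by simp
    then have "norm (s *\<^sub>R y - z) \<le> (1 - \<xi>) * norm (u - z) + \<xi> * norm (y - z)"
      using xi norm_triangle_ineq[of "(1 - \<xi>) *\<^sub>R (u - z)" "\<xi> *\<^sub>R (y - z)"] by simp
    also have "\<dots> \<le> (1 - \<xi>) * (2 * norm (y - z)) + \<xi> * (2 * norm (y - z))"
      using xi uz by (intro add_mono mult_left_mono) auto
    also have "\<dots> = 2 * norm (y - z)" by algebra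
    finally show ?thesis .
  qed
  show ?thesis using s0 close eq unfolding u_def by blast
qed

end

context
  fixes W :: "real^'n::finite \<Rightarrow> real" and D :: "real^'n \<Rightarrow> real^'n \<Rightarrow> real"
    and f :: "real^'n \<Rightarrow> real^'n" and r :: real and G :: "(real^'n) set"
  assumes Wd: "\<And>x. (W has_derivative D x) (at x)"
    and Wc: "continuous_on UNIV W"
    and Dc: "continuous_on UNIV (\<lambda>x. D x x)"
    and W0: "W 0 = 0"
    and r: "r > 0"
    and Gpos: "\<And>x. x \<in> cball 0 r \<Longrightarrow> x \<noteq> 0 \<Longrightarrow> W x > 0 \<and> D x (f x) < 0"
    and cballG: "cball 0 r \<subseteq> G"
begin

definition "cc = (INF x\<in>sphere 0 r. W x)"

lemma cc_le: "norm x = r \<Longrightarrow> cc \<le> W x"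
proof -
  assume x: "norm x = r"
  have nn: "0 \<le> W y" if "y \<in> sphere 0 r" for y
  proof -
    have "y \<in> cball 0 r" "y \<noteq> 0" using that r by auto
    then show ?thesis using Gpos[of y] by simp
  qed
  have "bdd_below (W ` sphere 0 r)"
    using nn by (rule bdd_belowI2)
  then show ?thesis unfolding cc_def using x by (intro cINF_lower) auto
qed

lemma cc_att: "\<exists>z. norm z = r \<and> W z = cc"
proof -
  have "sphere (0::real^'n) r \<noteq> {}" using r by simp
  from continuous_attains_inf[OF compact_sphere this continuous_on_subset[OF Wc]]
  obtain z where z: "z \<in> sphere 0 r" "\<And>y. y \<in> sphere 0 r \<Longrightarrow> W z \<le> W y" by auto
  have "cc \<le> W z" using z cc_le by auto
  moreover have "W z \<le> cc" unfolding cc_def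
    using z r by (intro cINF_greatest) auto
  ultimately show ?thesis using z by auto
qed

lemma cc_pos: "cc > 0"
proof -
  obtain z where "norm z = r" "W z = cc" using cc_att by blast
  then show ?thesis using Gpos[of z] r by auto
qed

lemma part1: "\<exists>S. admissible W G cc S"
proof -
  define Om where "Om = ball 0 r \<inter> {x. W x < cc}"
  have oO: "open Om" unfolding Om_def
    by (intro open_Int open_ball open_Collect_less Wc continuous_on_const)
  have O0: "0 \<in> Om" using r W0 cc_pos by (simp add: Om_def)
  define C where "C = connected_component_set Om 0"
  have oC: "open C" unfolding C_def using oO by (rule open_connected_component)
  have C0: "0 \<in> C" unfolding C_def using O0 by simp
  have CO: "C \<subseteq> Om" unfolding C_def by (rule connected_component_subset)
  have cC: "connected C" unfolding C_def by simp
  define S where "S = closure C"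
  have Sc: "S \<subseteq> cball 0 r" unfolding S_def
    using CO by (intro closure_minimal) (auto simp: Om_def)
  have SW: "\<And>x. x \<in> S \<Longrightarrow> W x \<le> cc"
  proof -
    have "S \<subseteq> {x. W x \<le> cc}" unfolding S_def
      using CO by (intro closure_minimal closed_Collect_le Wc continuous_on_const) (auto simp: Om_def)
    then show "\<And>x. x \<in> S \<Longrightarrow> W x \<le> cc" by auto
  qed
  have CS: "C \<subseteq> interior S" unfolding S_def using oC
    by (simp add: closure_subset interior_maximal)
  have "admissible W G cc S"
    unfolding admissible_def
  proof (intro conjI ballI)
    show "closed S" unfolding S_def by simp
    show "connected S" unfolding S_def using cC by (rule connected_imp_connected_closure)
    show "0 \<in> interior S" using CS C0 by auto
    show "compact S" using Sc unfolding S_def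
      by (meson bounded_cball bounded_subset closed_closure compact_eq_bounded_closed)
    show "S \<subseteq> G" using Sc cballG by auto
  next
    fix x assume x: "x \<in> interior S"
    then have xS: "x \<in> S" using interior_subset by blast
    show "W x < cc"
    proof (rule ccontr)
      assume "\<not> W x < cc"
      with SW[OF xS] have Wx: "W x = cc" by simp
      then have x0: "x \<noteq> 0" using W0 cc_pos by auto
      have "D x (f x) < 0" using Gpos[OF _ x0] Sc xS by auto
      moreover have "D x (- f x) = - D x (f x)" using D_scale[OF Wd, of x "-1" "f x"] by simp
      ultimately have pos: "D x (- f x) > 0" by simp
      obtain e where e: "e > 0" "ball x e \<subseteq> interior S"
        using x open_interior open_contains_ball by blast
      obtain y where y: "y \<in> ball x e" "W y > W x" using increase[OF Wd pos e(1)] by blast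
      then have "y \<in> S" using e interior_subset by blast
      with SW y Wx show False by force
    qed
  next
    fix x assume x: "x \<in> frontier S"
    have xS: "x \<in> S" using x unfolding S_def frontier_def by simp
    have xi: "x \<notin> interior S" using x unfolding frontier_def by simp
    show "W x = cc"
    proof (rule ccontr)
      assume "W x \<noteq> cc"
      with SW[OF xS] have Wx: "W x < cc" by simp
      have "norm x \<noteq> r" using cc_le Wx by force
      with Sc xS have "norm x < r" by force
      with Wx have xO: "x \<in> Om" by (simp add: Om_def)
      obtain e where e: "e > 0" "ball x e \<subseteq> Om" using oO xO open_contains_ball by blast
      obtain y where y: "y \<in> C" "dist y x < e" using xS e(1) unfolding S_def closure_approachable by blast
      have "C \<union> ball x e \<subseteq> connected_component_set Om 0"
      proof (rule connected_component_maximal)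
        show "0 \<in> C \<union> ball x e" using C0 by simp
        show "connected (C \<union> ball x e)"
          using y by (intro connected_Un cC connected_ball) (auto simp: dist_commute)
        show "C \<union> ball x e \<subseteq> Om" using CO e by auto
      qed
      then have "ball x e \<subseteq> S" unfolding S_def C_def[symmetric] using closure_subset by blast
      then have "x \<in> interior S" using e(1) by (meson centre_in_ball interior_maximal open_ball subsetD)
      with xi show False by simp
    qed
  qed
  then show ?thesis by blast
qed


lemma sign_ball:
  assumes z: "D z z \<noteq> 0"
  shows "\<exists>e>0. e \<le> r \<and> (\<forall>w\<in>ball z e. D w w * D z z > 0)"
proof -
  have o: "open {w. 0 < D w w * D z z}"
    by (intro open_Collect_less continuous_on_const continuous_on_mult Dc)
  have "z \<in> {w. 0 < D w w * D z z}" using z by (simp add: zero_less_mult_iff) (use z in linarith)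
  then obtain e where e: "e > 0" "ball z e \<subseteq> {w. 0 < D w w * D z z}"
    using o open_contains_ball by blast
  show ?thesis using e r by (intro exI[of _ "min e r"]) auto
qed

lemma radial_key:
  assumes z: "norm z = r" and e: "e > 0" "e \<le> r" and eb: "\<forall>w\<in>ball z e. D w w * D z z > 0"
    and y: "y \<in> ball z (e/2)" and ny: "norm y \<noteq> r"
    and sg: "(norm y - r) * D z z > 0"
  shows "W y > cc"
proof -
  have "norm y \<ge> norm z - norm (y - z)"
    using norm_triangle_ineq2[of z y] by (simp add: norm_minus_commute)
  moreover have "norm (y - z) < e/2" using y by (simp add: dist_norm norm_minus_commute)
  ultimately have "norm y > 0" using z e by linarith
  then have y0: "y \<noteq> 0" by auto
  obtain s where s: "s > 0" "\<And>z. norm z = r \<Longrightarrow> norm (s *\<^sub>R y - z) \<le> 2 * norm (y - z)"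
    "W y - W ((r / norm y) *\<^sub>R y) = ((norm y - r) / (norm y * s)) * D (s *\<^sub>R y) (s *\<^sub>R y)"
    using radial_mvt[OF Wd r y0] by blast
  have "norm (s *\<^sub>R y - z) < e" using s(2)[OF z] \<open>norm (y - z) < e/2\<close> by simp
  then have "D (s *\<^sub>R y) (s *\<^sub>R y) * D z z > 0" using eb by (simp add: dist_norm norm_minus_commute)
  moreover have "norm y * s > 0" using y0 s(1) by simp
  ultimately have "((norm y - r) / (norm y * s)) * D (s *\<^sub>R y) (s *\<^sub>R y) > 0"
  proof -
    assume h1: "D (s *\<^sub>R y) (s *\<^sub>R y) * D z z > 0" and h2: "norm y * s > 0"
    have "((norm y - r) * D (s *\<^sub>R y) (s *\<^sub>R y)) * (D z z * D z z)
        = ((norm y - r) * D z z) * (D (s *\<^sub>R y) (s *\<^sub>R y) * D z z)" by algebra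
    moreover have "((norm y - r) * D z z) * (D (s *\<^sub>R y) (s *\<^sub>R y) * D z z) > 0"
      using sg h1 by (rule mult_pos_pos)
    moreover have "D z z * D z z \<ge> 0" by simp
    ultimately have "(norm y - r) * D (s *\<^sub>R y) (s *\<^sub>R y) > 0"
      using mult_nonpos_nonneg[of "(norm y - r) * D (s *\<^sub>R y) (s *\<^sub>R y)" "D z z * D z z"]
      by (simp only: not_less[symmetric]) (meson not_less)
    then have "((norm y - r) * D (s *\<^sub>R y) (s *\<^sub>R y)) / (norm y * s) > 0"
      using h2 by simp
    then show ?thesis by simp
  qed
  moreover have "W ((r / norm y) *\<^sub>R y) \<ge> cc" using y0 r by (intro cc_le) simp
  ultimately show ?thesis using s(3) by linarith
qed

lemma part2:
  assumes S: "admissible W G cc S"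
  shows "S \<subseteq> cball 0 r"
proof -
  have cS: "closed S" and conS: "connected S" and S0: "0 \<in> interior S"
    and Sint: "\<And>x. x \<in> interior S \<Longrightarrow> W x < cc" and Sfr: "\<And>x. x \<in> frontier S \<Longrightarrow> W x = cc"
    using S unfolding admissible_def by auto
  have SW: "W x \<le> cc" if "x \<in> S" for x
  proof (cases "x \<in> interior S")
    case True then show ?thesis using Sint by force
  next
    case False
    then have "x \<in> frontier S" using that cS by (simp add: frontier_def)
    then show ?thesis using Sfr by force
  qed
  have sph: "D z z \<noteq> 0 \<and> W z = cc" if "z \<in> S" "norm z = r" for z
  proof -
    have Wz: "W z = cc" using SW[OF that(1)] cc_le[OF that(2)] by simp
    have "z \<in> cball 0 r" "z \<noteq> 0" using that r by auto
    then have v: "D z (f z) < 0" using Gpos by blast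
    have "D z z \<noteq> 0"
      by (rule lagrange[OF Wd r that(2) _ v]) (use Wz cc_le in auto)
    then show ?thesis using Wz by simp
  qed
  define E where "E z = (SOME e. e > 0 \<and> e \<le> r \<and> (\<forall>w\<in>ball z e. D w w * D z z > 0))" for z
  have E: "E z > 0 \<and> E z \<le> r \<and> (\<forall>w\<in>ball z (E z). D w w * D z z > 0)" if "D z z \<noteq> 0" for z
    unfolding E_def by (rule someI_ex) (rule sign_ball[OF that])
  define U1 where "U1 = ball 0 r \<union> (\<Union>z\<in>{z. norm z = r \<and> D z z > 0}. ball z (E z / 2))"
  define U2 where "U2 = - cball 0 r \<union> (\<Union>z\<in>{z. norm z = r \<and> D z z < 0}. ball z (E z / 2))"
  have oU1: "open U1" unfolding U1_def by (intro open_Un open_ball open_UN) auto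
  have oU2: "open U2" unfolding U2_def by (intro open_Un open_Compl closed_cball open_UN) auto
  have posk: False if "y \<in> S" "norm z = r" "D z z > 0" "y \<in> ball z (E z / 2)" "norm y > r" for y z
  proof -
    have Ez: "E z > 0" "E z \<le> r" "\<forall>w\<in>ball z (E z). D w w * D z z > 0" using E[of z] that(3) by auto
    have "W y > cc"
      by (rule radial_key[OF that(2) Ez that(4)]) (use that(3,5) in auto)
    then show False using SW[OF that(1)] by simp
  qed
  have negk: False if "y \<in> S" "norm z = r" "D z z < 0" "y \<in> ball z (E z / 2)" "norm y < r" for y z
  proof -
    have Ez: "E z > 0" "E z \<le> r" "\<forall>w\<in>ball z (E z). D w w * D z z > 0" using E[of z] that(3) by auto
    have "W y > cc"
      by (rule radial_key[OF that(2) Ez that(4)]) (use that(3,5) in \<open>auto simp: mult_neg_neg\<close>)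
    then show False using SW[OF that(1)] by simp
  qed
  have signs: "D y y * D z z > 0" if "norm z = r" "D z z \<noteq> 0" "y \<in> ball z (E z / 2)" for y z
  proof -
    have "y \<in> ball z (E z)" using that(3) E[OF that(2)] by auto
    then show ?thesis using E[OF that(2)] by blast
  qed
  have disj: "U1 \<inter> U2 \<inter> S = {}"
  proof (rule ccontr)
    assume "U1 \<inter> U2 \<inter> S \<noteq> {}"
    then obtain y where y: "y \<in> U1" "y \<in> U2" "y \<in> S" by blast
    show False
    proof (cases "norm y < r")
      case lt: True
      then have "y \<notin> - cball 0 r" by simp
      with y(2) have "y \<in> (\<Union>z\<in>{z. norm z = r \<and> D z z < 0}. ball z (E z / 2))"
        unfolding U2_def by blast
      then obtain z where "norm z = r" "D z z < 0" "y \<in> ball z (E z / 2)" by blast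
      then show False using negk[OF y(3)] lt by blast
    next
      case False
      then have ge: "norm y \<ge> r" by simp
      then have "y \<notin> ball 0 r" by simp
      with y(1) have "y \<in> (\<Union>z\<in>{z. norm z = r \<and> D z z > 0}. ball z (E z / 2))"
        unfolding U1_def by blast
      then obtain z1 where z1: "norm z1 = r" "D z1 z1 > 0" "y \<in> ball z1 (E z1 / 2)" by blast
      show False
      proof (cases "norm y = r")
        case True
        then have "y \<notin> - cball 0 r" by simp
        with y(2) have "y \<in> (\<Union>z\<in>{z. norm z = r \<and> D z z < 0}. ball z (E z / 2))"
          unfolding U2_def by blast
        then obtain z2 where z2: "norm z2 = r" "D z2 z2 < 0" "y \<in> ball z2 (E z2 / 2)" by blast
        have a: "D y y * D z1 z1 > 0" using signs[of z1 y] z1 by simp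
        have b: "D y y * D z2 z2 > 0" using signs[of z2 y] z2 by simp
        from a z1(2) have "D y y > 0" by (simp add: zero_less_mult_iff)
        moreover from b z2(2) have "D y y < 0" by (simp add: zero_less_mult_iff)
        ultimately show False by simp
      next
        case False
        then have "norm y > r" using ge by simp
        then show False using posk[OF y(3) z1] by blast
      qed
    qed
  qed
  have cover: "S \<subseteq> U1 \<union> U2"
  proof
    fix y assume yS: "y \<in> S"
    consider "norm y < r" | "norm y > r" | "norm y = r" by linarith
    then show "y \<in> U1 \<union> U2"
    proof cases
      case 1 then have "y \<in> ball 0 r" by simp
      then show ?thesis unfolding U1_def by blast
    next
      case 2 then have "y \<in> - cball 0 r" by simp
      then show ?thesis unfolding U2_def by blast
    next
      case 3
      then have d: "D y y \<noteq> 0" using sph[OF yS] by simp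
      have yb: "y \<in> ball y (E y / 2)" using E[OF d] by simp
      show ?thesis
      proof (cases "D y y > 0")
        case True
        then have "y \<in> (\<Union>z\<in>{z. norm z = r \<and> D z z > 0}. ball z (E z / 2))" using 3 yb by blast
        then show ?thesis unfolding U1_def by blast
      next
        case False then have "D y y < 0" using d by simp
        then have "y \<in> (\<Union>z\<in>{z. norm z = r \<and> D z z < 0}. ball z (E z / 2))" using 3 yb by blast
        then show ?thesis unfolding U2_def by blast
      qed
    qed
  qed
  have "0 \<in> S" using S0 interior_subset by blast
  moreover have "(0::real^'n) \<in> ball 0 r" using r by simp
  then have "0 \<in> U1" unfolding U1_def by blast
  ultimately have "U1 \<inter> S \<noteq> {}" by blast
  then have U2S: "U2 \<inter> S = {}" using connectedD[OF conS oU1 oU2 disj cover] by blast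
  show ?thesis
  proof
    fix y assume yS: "y \<in> S"
    show "y \<in> cball 0 r"
    proof (rule ccontr)
      assume "y \<notin> cball 0 r"
      then have "y \<in> U2" unfolding U2_def by blast
      with yS U2S show False by blast
    qed
  qed
qed

end


theorem corollary2p5:
  fixes f :: "real^'n::finite \<Rightarrow> real^'n"
    and A :: "real^'n^'n"
    and V :: "real^'n \<Rightarrow> real"
    and gradV :: "real^'n \<Rightarrow> real^'n"
    and U :: "(real^'n) set"
    and c :: "('n \<Rightarrow> nat) \<Rightarrow> real"
    and \<rho> :: real
    and p :: nat
    and r :: real
  assumes f_analytic: "real_analytic_on f UNIV"
    and f0: "f 0 = 0"
    and A_deriv: "(f has_derivative (\<lambda>h. A *v h)) (at 0)"
    and A_stable: "\<And>(\<mu>::complex) (v::complex^'n). v \<noteq> 0 \<Longrightarrow>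
        (\<chi> i j. complex_of_real (A $ i $ j)) *v v = \<mu> *s v \<Longrightarrow> Re \<mu> < 0"
    and U: "open U" "0 \<in> U"
    and V_analytic: "real_analytic_on V U"
    and V_grad: "\<And>x. x \<in> U \<Longrightarrow> GDERIV V x :> gradV x"
    and V_lyap: "\<And>x. x \<in> U \<Longrightarrow> gradV x \<bullet> f x = - (norm x)\<^sup>2"
    and V0: "V 0 = 0"
    and c_taylor: "\<rho> > 0" "has_power_series V c 0 \<rho>"
    and p: "p \<ge> 2"
    and r_pos: "r > 0"
    and r_in_R: "cball 0 r \<subseteq> Gdom f (taylor_poly c p)"
  shows "(\<exists>S. admissible (taylor_poly c p) (Gdom f (taylor_poly c p))
                (INF x\<in>sphere 0 r. taylor_poly c p x) S)
       \<and> (\<forall>S. admissible (taylor_poly c p) (Gdom f (taylor_poly c p))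
                (INF x\<in>sphere 0 r. taylor_poly c p x) S \<longrightarrow> S \<subseteq> cball 0 r)"
proof -
  have Wd: "\<And>x. (taylor_poly c p has_derivative DW c p x) (at x)" by (rule W_deriv)
  have Gpos: "taylor_poly c p x > 0 \<and> DW c p x (f x) < 0" if x: "x \<in> cball 0 r" "x \<noteq> 0" for x
  proof -
    have "x \<in> Gdom f (taylor_poly c p)" using x r_in_R by blast
    then obtain S where S: "good_domain f (taylor_poly c p) S" "x \<in> S" unfolding Gdom_def by blast
    then have "taylor_poly c p x > 0 \<and> frechet_derivative (taylor_poly c p) (at x) (f x) < 0"
      using x unfolding good_domain_def by blast
    moreover have "frechet_derivative (taylor_poly c p) (at x) = DW c p x"
      using frechet_derivative_at[OF Wd[of x]] by simp
    ultimately show ?thesis by simp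
  qed
  have P1: "\<exists>S. admissible (taylor_poly c p) (Gdom f (taylor_poly c p)) (cc (taylor_poly c p) r) S"
  proof (rule part1[where D="DW c p" and f=f])
    show "\<And>x. (taylor_poly c p has_derivative DW c p x) (at x)" by (rule Wd)
    show "continuous_on UNIV (taylor_poly c p)" by (rule W_cont)
    show "continuous_on UNIV (\<lambda>x. DW c p x x)" by (rule DW_cont)
    show "taylor_poly c p 0 = 0" by (rule W0)
    show "r > 0" by (rule r_pos)
    show "\<And>x. x \<in> cball 0 r \<Longrightarrow> x \<noteq> 0 \<Longrightarrow> taylor_poly c p x > 0 \<and> DW c p x (f x) < 0"
      by (rule Gpos)
    show "cball 0 r \<subseteq> Gdom f (taylor_poly c p)" by (rule r_in_R)
  qed
  have P2: "S \<subseteq> cball 0 r"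
    if S: "admissible (taylor_poly c p) (Gdom f (taylor_poly c p)) (cc (taylor_poly c p) r) S" for S
  proof (rule part2[where D="DW c p" and f=f])
    show "\<And>x. (taylor_poly c p has_derivative DW c p x) (at x)" by (rule Wd)
    show "continuous_on UNIV (taylor_poly c p)" by (rule W_cont)
    show "continuous_on UNIV (\<lambda>x. DW c p x x)" by (rule DW_cont)
    show "taylor_poly c p 0 = 0" by (rule W0)
    show "r > 0" by (rule r_pos)
    show "\<And>x. x \<in> cball 0 r \<Longrightarrow> x \<noteq> 0 \<Longrightarrow> taylor_poly c p x > 0 \<and> DW c p x (f x) < 0"
      by (rule Gpos)
    show "cball 0 r \<subseteq> Gdom f (taylor_poly c p)" by (rule r_in_R)
    show "admissible (taylor_poly c p) (Gdom f (taylor_poly c p)) (cc (taylor_poly c p) r) S" by (rule S)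
  qed
  have ccq: "cc (taylor_poly c p) r = (INF x\<in>sphere 0 r. taylor_poly c p x)"
  proof (rule cc_def[where D="DW c p" and f=f and G="Gdom f (taylor_poly c p)"])
    show "\<And>x. (taylor_poly c p has_derivative DW c p x) (at x)" by (rule Wd)
    show "continuous_on UNIV (taylor_poly c p)" by (rule W_cont)
    show "continuous_on UNIV (\<lambda>x. DW c p x x)" by (rule DW_cont)
    show "taylor_poly c p 0 = 0" by (rule W0)
    show "r > 0" by (rule r_pos)
    show "\<And>x. x \<in> cball 0 r \<Longrightarrow> x \<noteq> 0 \<Longrightarrow> taylor_poly c p x > 0 \<and> DW c p x (f x) < 0"
      by (rule Gpos)
    show "cball 0 r \<subseteq> Gdom f (taylor_poly c p)" by (rule r_in_R)
  qed
  show ?thesis using P1 P2 unfolding ccq by blast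
qed

end
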